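(* Let $n\ge 2$, $s\in\mathbb{R}$, and let $u\in C^2((0,\infty))$. Then $$u(r)-u(r\tau)+\big(u(r)-u(\tfrac{r}{\tau})\big)\tau^{-n+2s}\le 0\quad\text{for all } r>0,\ \tau\ge1$$ holds if and only if $$u''(r)+(n-2s+1)\frac{u'(r)}{r}\ge 0\quad\text{for all } r>0.$$
   Context: $u$ is viewed as a radial function $x\mapsto u(|x|)$ on $\mathbb{R}^n$. *)

theory Defs
  imports "HOL-Analysis.Analysis"
begin

end

theory Submission
  imports Defs
begin


lemma powr_aux: "(\<tau>::real) > 0 \<Longrightarrow> \<tau> powr c / \<tau> = 1 / \<tau> powr (1 - c)"
  by (simp add: powr_diff powr_minus divide_simps)

lemma back_dir:
  fixes c :: real and u u' u'' :: "real \<Rightarrow> real"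
  assumes du: "\<And>r. r > 0 \<Longrightarrow> (u has_real_derivative u' r) (at r)"
    and du': "\<And>r. r > 0 \<Longrightarrow> (u' has_real_derivative u'' r) (at r)"
    and H: "\<forall>r>0. u'' r + (1 - c) * u' r / r \<ge> 0"
    and r: "r > 0" and t: "\<tau> \<ge> 1"
  shows "u r - u (r * \<tau>) + (u r - u (r / \<tau>)) * \<tau> powr c \<le> 0"
proof -
  define p where "p = 1 - c"
  have psi: "x powr p * u' x \<le> y powr p * u' y" if "0 < x" "x \<le> y" for x y
  proof (rule deriv_nonneg_imp_mono[where g = "\<lambda>z. z powr p * u' z" and g' = "\<lambda>z. p * z powr (p-1) * u' z + z powr p * u'' z"])
    fix z assume z: "z \<in> {x..y}"
    hence zp: "z > 0" using that by auto
    show "((\<lambda>z. z powr p * u' z) has_real_derivative p * z powr (p-1) * u' z + z powr p * u'' z) (at z)"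
      using DERIV_mult[OF has_real_derivative_powr[OF zp, of p] du'[OF zp]] by (simp add: algebra_simps)
    have "p * z powr (p-1) * u' z + z powr p * u'' z = z powr p * (u'' z + p * u' z / z)"
      using zp by (simp add: powr_diff field_simps)
    also have "\<dots> \<ge> 0" using H zp p_def by auto
    finally show "p * z powr (p-1) * u' z + z powr p * u'' z \<ge> 0" .
  qed (use that in auto)
  have tp: "\<tau> > 0" using t by auto
  define D where "D = (\<lambda>\<rho>. u \<rho> - \<tau> powr c * u (\<rho> / \<tau>))"
  have "D r \<le> D (r * \<tau>)"
  proof (rule deriv_nonneg_imp_mono[where g = D and g' = "\<lambda>\<rho>. u' \<rho> - \<tau> powr c * (u' (\<rho>/\<tau>) / \<tau>)"])
    fix z assume z: "z \<in> {r..r*\<tau>}"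
    hence zp: "z > 0" using r by auto
    show "(D has_real_derivative u' z - \<tau> powr c * (u' (z/\<tau>) / \<tau>)) (at z)"
      unfolding D_def using zp tp
      by (auto intro!: derivative_eq_intros DERIV_chain2[OF du] simp: algebra_simps)
    have "(z/\<tau>) powr p * u' (z/\<tau>) \<le> z powr p * u' z"
      using psi[of "z/\<tau>" z] zp tp t by (simp add: divide_le_eq)
    hence "z powr p * (u' (z/\<tau>) / \<tau> powr p) \<le> z powr p * u' z"
      using zp tp by (simp add: powr_divide field_simps)
    hence "u' (z/\<tau>) / \<tau> powr p \<le> u' z" using zp
    proof -
      have "z powr p > 0" using zp by simp
      thus ?thesis using \<open>z powr p * (u' (z/\<tau>) / \<tau> powr p) \<le> z powr p * u' z\<close>
        using mult_le_cancel_left_pos by blast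
    qed
    moreover have "\<tau> powr c * (u' (z/\<tau>) / \<tau>) = u' (z/\<tau>) / \<tau> powr p"
    proof -
      have "\<tau> powr c / \<tau> = 1 / \<tau> powr p" using powr_aux[OF tp, of c] p_def by simp
      have "\<tau> powr c * (u' (z/\<tau>) / \<tau>) = (\<tau> powr c / \<tau>) * u' (z/\<tau>)" by simp
      also have "\<dots> = (1 / \<tau> powr p) * u' (z/\<tau>)" by (simp only: \<open>\<tau> powr c / \<tau> = 1 / \<tau> powr p\<close>)
      also have "\<dots> = u' (z/\<tau>) / \<tau> powr p" by simp
      finally show ?thesis .
    qed
    ultimately show "u' z - \<tau> powr c * (u' (z/\<tau>) / \<tau>) \<ge> 0" by simp
  qed (use r t in auto)
  thus ?thesis unfolding D_def using tp by (simp add: algebra_simps)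
qed

lemma fwd_dir:
  fixes c :: real and u u' u'' :: "real \<Rightarrow> real"
  assumes du: "\<And>r. r > 0 \<Longrightarrow> (u has_real_derivative u' r) (at r)"
    and du': "\<And>r. r > 0 \<Longrightarrow> (u' has_real_derivative u'' r) (at r)"
    and G: "\<forall>r>0. \<forall>\<tau>\<ge>1. u r - u (r * \<tau>) + (u r - u (r / \<tau>)) * \<tau> powr c \<le> 0"
    and r: "r > 0"
  shows "u'' r + (1 - c) * u' r / r \<ge> 0"
proof (rule ccontr)
  assume neg: "\<not> ?thesis"
  define g where "g = (\<lambda>\<tau>. u r - u (r * \<tau>) + (u r - u (r / \<tau>)) * \<tau> powr c)"
  define g' where "g' = (\<lambda>\<tau>. - (u' (r * \<tau>) * r) + u' (r / \<tau>) * (r / \<tau>^2) * \<tau> powr c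
      + (u r - u (r / \<tau>)) * (c * \<tau> powr (c - 1)))"
  have c1: "((\<lambda>\<tau>. u (r * \<tau>)) has_real_derivative u' (r * \<tau>) * r) (at \<tau>)" if "\<tau> > 0" for \<tau>
    by (rule DERIV_chain2[OF du]) (use that r in \<open>auto intro!: derivative_eq_intros\<close>)
  have c2: "((\<lambda>\<tau>. u (r / \<tau>)) has_real_derivative u' (r / \<tau>) * (- r / \<tau>^2)) (at \<tau>)" if "\<tau> > 0" for \<tau>
    by (rule DERIV_chain2[OF du]) (use that r in \<open>auto intro!: derivative_eq_intros simp: field_simps power2_eq_square\<close>)
  have c3: "((\<lambda>\<tau>. u' (r * \<tau>)) has_real_derivative u'' (r * \<tau>) * r) (at \<tau>)" if "\<tau> > 0" for \<tau>
    by (rule DERIV_chain2[OF du']) (use that r in \<open>auto intro!: derivative_eq_intros\<close>)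
  have c4: "((\<lambda>\<tau>. u' (r / \<tau>)) has_real_derivative u'' (r / \<tau>) * (- r / \<tau>^2)) (at \<tau>)" if "\<tau> > 0" for \<tau>
    by (rule DERIV_chain2[OF du']) (use that r in \<open>auto intro!: derivative_eq_intros simp: field_simps power2_eq_square\<close>)
  have dg: "(g has_real_derivative g' \<tau>) (at \<tau>)" if "\<tau> > 0" for \<tau>
    unfolding g_def g'_def
    by (rule derivative_eq_intros c1 c2 has_real_derivative_powr | use that in simp)+
  define L where "L = - 2 * r^2 * (u'' r + (1 - c) * u' r / r)"
  have Lpos: "L > 0" using neg r unfolding L_def by (simp add: mult_pos_neg)
  have dg': "(g' has_real_derivative L) (at 1)"
    unfolding g'_def L_def
    apply (rule derivative_eq_intros c2 c3 c4 has_real_derivative_powr | simp)+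
    using r by (simp add: field_simps power2_eq_square)
  have g'1: "g' 1 = 0" unfolding g'_def by simp
  have g1: "g 1 = 0" unfolding g_def by simp
  obtain d where d: "d > 0" "\<And>h. h > 0 \<Longrightarrow> h < d \<Longrightarrow> g' 1 < g' (1 + h)"
    using DERIV_pos_inc_right[OF dg' Lpos] by blast
  obtain z where z: "1 < z" "z < 1 + d/2" "g (1 + d/2) - g 1 = (1 + d/2 - 1) * g' z"
    using MVT2[of 1 "1 + d/2" g g'] dg d(1) by auto
  have "g' z > 0" using d(2)[of "z - 1"] z g'1 by auto
  hence "g (1 + d/2) > 0" using z g1 d(1)
    by (metis diff_zero mult_pos_pos half_gt_zero add_diff_cancel_left')
  moreover have "g (1 + d/2) \<le> 0" using G r d(1) unfolding g_def by auto
  ultimately show False by simp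
qed


theorem theorem1p3:
  fixes n :: nat and s :: real and u u' u'' :: "real \<Rightarrow> real"
  assumes "n \<ge> 2"
    and "\<And>r. r > 0 \<Longrightarrow> (u has_real_derivative u' r) (at r)"
    and "\<And>r. r > 0 \<Longrightarrow> (u' has_real_derivative u'' r) (at r)"
    and "continuous_on {0<..} u''"
  shows "(\<forall>r>0. \<forall>\<tau>\<ge>1. u r - u (r * \<tau>) + (u r - u (r / \<tau>)) * \<tau> powr (- real n + 2 * s) \<le> 0)
     \<longleftrightarrow> (\<forall>r>0. u'' r + (real n - 2 * s + 1) * u' r / r \<ge> 0)"
proof -
  have e: "real n - 2 * s + 1 = 1 - (- real n + 2 * s)" by simp
  show ?thesis
    unfolding e
    using fwd_dir[OF assms(2,3)] back_dir[OF assms(2,3)] by blast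
qed

end
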